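(* Let $\mathcal{T}, \eta > 0 $, $\boldsymbol{v} \in C^1([0,\mathcal{T});\overline{\Omega})$ and let \[ u\in C([0,\mathcal{T});C^2(\overline{\Omega}))\cap C^1([0,\mathcal{T});C(\overline{\Omega})) \] denote a strictly positive classical solution of the non-linear Fokker--Planck equation \begin{equation*} \begin{cases} \begin{alignedat}{3} \partial_t&u && = \partial_x (u(\eta\partial_x\log(u)+ \partial_xf'(u)+ \boldsymbol{v})), &&\text{ in } (0,\mathcal{T}) \times \Omega,\\ &u_0 && = u &&\text{ on } \{0\}\times \overline{\Omega},\\ &0 && = u (\eta\partial_x\log(u) + \partial_xf'(u) + \boldsymbol{v}) &&\text{ on } (0,\mathcal{T})\times \partial\Omega. \end{alignedat} \end{cases} \end{equation*} Then, there exists $K_1 \coloneqq K_1(\boldsymbol{v}) > 0$, whose size depends only on $\|\boldsymbol{v}\|_{L^\infty([0,\mathcal{T})\times\Omega)}$ such that, for each $p \in \mathbb{R} \setminus \{0,1\}$, the following energy dissipation inequality is satisfied on $(0,\mathcal{T})$. \begin{equation*} \frac{1}{p(p-1)}\partial_t \int_{\Omega}u^p dx + \frac{1}{2}\int_{\Omega} \left(\eta+ 2 uf''(u)\right)u^{p-2}|\partial_x u|^2 dx \leqslant \frac{C_1}{\eta}\int_{\Omega}u^p dx. \end{equation*} Furthermore, there exist $K_2,K_3,K_4,K_5 > 0$, whose sizes depend only on $K_1,|\Omega|$ and $\eta$, such that, when $|p| > K_5$, the following energy dissipation inequality is satisfied on $(0,\mathcal{T})$ \begin{equation*} \partial_t\int_{\Omega}u^p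 dx+ K_2\int_{\Omega}u^p dx\leqslant K_3|p|^{K_4}\left(\int_{\Omega}u^\frac{p}{2}\right)^2. \end{equation*}
   Context: $\Omega=(0,L)$ is a bounded open interval; $f\in C^{4,\beta}_{loc}(0,+\infty)$ for some $\beta\in(0,1]$ with $f''\ge 0$ on $(0,+\infty)$. The constant $C_1$ appearing in the first inequality is the constant $K_1$ (in the proof $K_1=\frac12\|\boldsymbol{v}\|^2_{L^\infty}$). *)

theory Defs
  imports "HOL-Analysis.Analysis"
begin

definition holder_loc_pos :: "real \<Rightarrow> (real \<Rightarrow> real) \<Rightarrow> bool" where
  "holder_loc_pos \<beta> g \<longleftrightarrow>
     (\<forall>a b. 0 < a \<and> a \<le> b \<longrightarrow>
        (\<exists>C. \<forall>x\<in>{a..b}. \<forall>y\<in>{a..b}. \<bar>g x - g y\<bar> \<le> C * \<bar>x - y\<bar> powr \<beta>))"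

definition C4beta_loc_pos ::
  "real \<Rightarrow> (real \<Rightarrow> real) \<Rightarrow> (real \<Rightarrow> real) \<Rightarrow> (real \<Rightarrow> real)
     \<Rightarrow> (real \<Rightarrow> real) \<Rightarrow> (real \<Rightarrow> real) \<Rightarrow> bool" where
  "C4beta_loc_pos \<beta> f f1 f2 f3 f4 \<longleftrightarrow>
     (\<forall>s>0. (f has_real_derivative f1 s) (at s) \<and> (f1 has_real_derivative f2 s) (at s)
          \<and> (f2 has_real_derivative f3 s) (at s) \<and> (f3 has_real_derivative f4 s) (at s))
     \<and> continuous_on {0<..} f4 \<and> holder_loc_pos \<beta> f4"

definition C1_strip :: "real \<Rightarrow> real \<Rightarrow> (real \<Rightarrow> real \<Rightarrow> real) \<Rightarrow> bool" where
  "C1_strip T L w \<longleftrightarrow>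
     (\<exists>wt wx. (\<forall>t\<in>{0..<T}. \<forall>x\<in>{0..L}.
          ((\<lambda>s. w s x) has_real_derivative wt t x) (at t within {0..<T})
        \<and> ((\<lambda>y. w t y) has_real_derivative wx t x) (at x within {0..L}))
      \<and> continuous_on ({0..<T} \<times> {0..L}) (\<lambda>(t,x). w t x)
      \<and> continuous_on ({0..<T} \<times> {0..L}) (\<lambda>(t,x). wt t x)
      \<and> continuous_on ({0..<T} \<times> {0..L}) (\<lambda>(t,x). wx t x))"

text \<open>Regularity
  u in C([0,T);C^2([0,L])) \<inter> C^1([0,T);C([0,L])) is expressed by joint continuity
  of u, u_x, u_xx, u_t on [0,T) x [0,L] (one-sided derivatives at the boundary).
  The flux u (eta d_x log u + d_x f'(u) + v) is written with the chain rule as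
  u (eta u_x / u + f''(u) u_x + v).\<close>
definition FP_classical_solution ::
  "real \<Rightarrow> real \<Rightarrow> real \<Rightarrow> (real \<Rightarrow> real \<Rightarrow> real) \<Rightarrow> (real \<Rightarrow> real)
     \<Rightarrow> (real \<Rightarrow> real \<Rightarrow> real) \<Rightarrow> bool" where
  "FP_classical_solution L T \<eta> v f2 u \<longleftrightarrow>
     (\<exists>ux uxx ut.
        (\<forall>t\<in>{0..<T}. \<forall>x\<in>{0..L}.
            0 < u t x
          \<and> ((\<lambda>y. u t y) has_real_derivative ux t x) (at x within {0..L})
          \<and> ((\<lambda>y. ux t y) has_real_derivative uxx t x) (at x within {0..L})
          \<and> ((\<lambda>s. u s x) has_real_derivative ut t x) (at t within {0..<T}))
      \<and> continuous_on ({0..<T} \<times> {0..L}) (\<lambda>(t,x). u t x)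
      \<and> continuous_on ({0..<T} \<times> {0..L}) (\<lambda>(t,x). ux t x)
      \<and> continuous_on ({0..<T} \<times> {0..L}) (\<lambda>(t,x). uxx t x)
      \<and> continuous_on ({0..<T} \<times> {0..L}) (\<lambda>(t,x). ut t x)
      \<and> (let J = (\<lambda>t y. u t y * (\<eta> * ux t y / u t y + f2 (u t y) * ux t y + v t y)) in
           (\<forall>t\<in>{0<..<T}. \<forall>x\<in>{0<..<L}. ((\<lambda>y. J t y) has_real_derivative ut t x) (at x))
         \<and> (\<forall>t\<in>{0<..<T}. J t 0 = 0 \<and> J t L = 0)))"

definition sup_norm_strip :: "real \<Rightarrow> real \<Rightarrow> (real \<Rightarrow> real \<Rightarrow> real) \<Rightarrow> real" where
  "sup_norm_strip T L v = Sup {\<bar>v t x\<bar> | t x. t \<in> {0..<T} \<and> x \<in> {0<..<L}}"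

end

theory Submission
  imports Defs
begin


lemma slice_cont:
  assumes "continuous_on (A \<times> B) (\<lambda>(s,x). g s x)" "t \<in> A"
  shows "continuous_on B (g t)"
proof -
  have "continuous_on B ((\<lambda>(s,x). g s x) \<circ> (\<lambda>x. (t,x)))"
    by (rule continuous_on_compose) (auto intro!: continuous_intros continuous_on_subset[OF assms(1)] simp: assms(2))
  then show ?thesis by (simp add: o_def)
qed

lemma nash_step1:
  fixes w wx :: "real \<Rightarrow> real"
  assumes "0 < L"
    and d: "\<And>x. x \<in> {0..L} \<Longrightarrow> (w has_real_derivative wx x) (at x within {0..L})"
    and cwx: "continuous_on {0..L} wx"
    and c: "c \<in> {0..L}" "d \<in> {0..L}" "c \<le> d"
  shows "\<bar>w d - w c\<bar> \<le> integral {0..L} (\<lambda>x. \<bar>wx x\<bar>)"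
proof -
  have "(wx has_integral (w d - w c)) {c..d}"
    apply (rule fundamental_theorem_of_calculus)
    using c apply simp
  proof -
    fix x assume x: "x \<in> {c..d}"
    have "(w has_real_derivative wx x) (at x within {c..d})"
      apply (rule DERIV_subset[OF d]) using c x by auto
    then show "(w has_vector_derivative wx x) (at x within {c..d})"
      by (simp add: has_real_derivative_iff_has_vector_derivative)
  qed
  then have e: "integral {c..d} wx = w d - w c" by blast
  have sub: "{c..d} \<subseteq> {0..L}" using c by auto
  have i1: "wx integrable_on {c..d}"
    using continuous_on_subset[OF cwx sub] integrable_continuous_real by blast
  have i2: "(\<lambda>x. \<bar>wx x\<bar>) integrable_on {c..d}"
    using continuous_on_subset[OF cwx sub] by (intro integrable_continuous_real continuous_intros)
  have i3: "(\<lambda>x. \<bar>wx x\<bar>) integrable_on {0..L}"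
    using cwx by (intro integrable_continuous_real continuous_intros)
  have "\<bar>integral {c..d} wx\<bar> \<le> integral {c..d} (\<lambda>x. \<bar>wx x\<bar>)"
    using integral_norm_bound_integral[OF i1 i2] by simp
  also have "\<dots> \<le> integral {0..L} (\<lambda>x. \<bar>wx x\<bar>)"
    by (rule integral_subset_le[OF sub i2 i3]) auto
  finally show ?thesis using e by simp
qed

lemma nash0:
  fixes w wx :: "real \<Rightarrow> real"
  assumes L: "0 < L"
    and d: "\<And>x. x \<in> {0..L} \<Longrightarrow> (w has_real_derivative wx x) (at x within {0..L})"
    and cw: "continuous_on {0..L} w"
    and cwx: "continuous_on {0..L} wx"
    and pos: "\<And>x. x \<in> {0..L} \<Longrightarrow> 0 \<le> w x"
  shows "L * integral {0..L} (\<lambda>x. (w x)\<^sup>2) \<le> (integral {0..L} w)\<^sup>2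
           + L * integral {0..L} w * integral {0..L} (\<lambda>x. \<bar>wx x\<bar>)"
proof -
  define A where "A = integral {0..L} (\<lambda>x. \<bar>wx x\<bar>)"
  define M where "M = integral {0..L} w"
  have diff: "w x - w y \<le> A" if "x \<in> {0..L}" "y \<in> {0..L}" for x y
  proof (cases "y \<le> x")
    case True
    then show ?thesis using nash_step1[OF L d cwx that(2) that(1)] unfolding A_def by auto
  next
    case False
    then show ?thesis using nash_step1[OF L d cwx that(1) that(2)] unfolding A_def by auto
  qed
  have iw: "w integrable_on {0..L}" using cw integrable_continuous_real by blast
  have step2: "L * w x - M \<le> L * A" if x: "x \<in> {0..L}" for x
  proof -
    have "integral {0..L} (\<lambda>y. w x - w y) \<le> integral {0..L} (\<lambda>y. A)"
      by (rule integral_le) (auto intro!: integrable_diff iw diff x)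
    moreover have "integral {0..L} (\<lambda>y. w x - w y) = L * w x - M"
      using integral_diff[OF integrable_const_ivl[of "w x" 0 L] iw] L by (simp add: M_def)
    ultimately show ?thesis using L by simp
  qed
  have "integral {0..L} (\<lambda>x. L * (w x)\<^sup>2) \<le> integral {0..L} (\<lambda>x. (M + L * A) * w x)"
  proof (rule integral_le)
    show "(\<lambda>x. L * (w x)\<^sup>2) integrable_on {0..L}"
      using cw by (intro integrable_continuous_real continuous_intros)
    show "(\<lambda>x. (M + L * A) * w x) integrable_on {0..L}"
      using cw by (intro integrable_continuous_real continuous_intros)
    fix x assume x: "x \<in> {0..L}"
    have "L * w x * w x \<le> (M + L * A) * w x"
      using step2[OF x] pos[OF x] by (intro mult_right_mono) auto
    then show "L * (w x)\<^sup>2 \<le> (M + L * A) * w x" by (simp add: power2_eq_square)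
  qed
  then have "L * integral {0..L} (\<lambda>x. (w x)\<^sup>2) \<le> (M + L * A) * M"
    by (simp add: M_def)
  then show ?thesis by (simp add: A_def M_def power2_eq_square algebra_simps)
qed

lemma tder:
  fixes u ut :: "real \<Rightarrow> real \<Rightarrow> real"
  assumes t: "t \<in> {0<..<T}"
    and pos: "\<And>s x. s \<in> {0..<T} \<Longrightarrow> x \<in> {0..L} \<Longrightarrow> 0 < u s x"
    and dt: "\<And>s x. s \<in> {0..<T} \<Longrightarrow> x \<in> {0..L} \<Longrightarrow>
              ((\<lambda>s. u s x) has_real_derivative ut s x) (at s within {0..<T})"
    and cu: "continuous_on ({0..<T} \<times> {0..L}) (\<lambda>(s,x). u s x)"
    and cut: "continuous_on ({0..<T} \<times> {0..L}) (\<lambda>(s,x). ut s x)"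
  shows "((\<lambda>s. integral {0..L} (\<lambda>x. u s x powr p)) has_real_derivative
           integral {0..L} (\<lambda>x. p * u t x powr (p - 1) * ut t x)) (at t)"
proof -
  let ?U = "{0<..<T}"
  have sub: "?U \<times> {0..L} \<subseteq> {0..<T} \<times> {0..L}" by auto
  have cu': "continuous_on (?U \<times> {0..L}) (\<lambda>z. u (fst z) (snd z))"
    using continuous_on_subset[OF cu sub] by (simp add: case_prod_beta)
  have cut': "continuous_on (?U \<times> {0..L}) (\<lambda>z. ut (fst z) (snd z))"
    using continuous_on_subset[OF cut sub] by (simp add: case_prod_beta)
  have posz: "\<And>z. z \<in> ?U \<times> {0..L} \<Longrightarrow> 0 < u (fst z) (snd z)"
    using pos by auto
  have "((\<lambda>s. integral (cbox 0 L) (\<lambda>x. u s x powr p)) has_field_derivative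
           integral (cbox 0 L) (\<lambda>x. p * u t x powr (p - 1) * ut t x)) (at t within ?U)"
  proof (rule leibniz_rule_field_derivative[where fx = "\<lambda>s x. p * u s x powr (p - 1) * ut s x"])
    fix s x assume s: "s \<in> ?U" and x: "x \<in> cbox 0 L"
    have "((\<lambda>s. u s x) has_real_derivative ut s x) (at s within ?U)"
      apply (rule DERIV_subset[OF dt]) using s x by auto
    then show "((\<lambda>s. u s x powr p) has_field_derivative p * u s x powr (p - 1) * ut s x) (at s within ?U)"
      using pos[of s x] s x
      by (auto intro!: derivative_eq_intros simp: algebra_simps)
  next
    fix s assume s: "s \<in> ?U"
    have "continuous_on {0..L} (u s)" by (rule slice_cont[OF cu]) (use s in auto)
    then show "(\<lambda>x. u s x powr p) integrable_on cbox 0 L"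
      using pos[of s] s by (auto intro!: integrable_continuous_real continuous_intros simp: less_imp_neq[THEN not_sym])
  next
    show "continuous_on (?U \<times> cbox 0 L) (\<lambda>(s, x). p * u s x powr (p - 1) * ut s x)"
    proof -
      have "\<And>z. z \<in> ?U \<times> {0..L} \<Longrightarrow> u (fst z) (snd z) \<noteq> 0" using posz by (metis less_irrefl)
      then show ?thesis unfolding case_prod_beta using cu' cut'
        by (intro continuous_intros) auto
    qed
  qed (use t in auto)
  moreover have "at t within ?U = at t" using t by (intro at_within_open) auto
  ultimately show ?thesis by (simp only: cbox_interval)
qed

lemma ibp:
  fixes a b c w g2 :: "real \<Rightarrow> real"
  assumes L: "0 < L"
    and pos: "\<And>x. x \<in> {0..L} \<Longrightarrow> 0 < a x"
    and ca: "continuous_on {0..L} a" and cb: "continuous_on {0..L} b"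
    and cc: "continuous_on {0..L} c" and cw: "continuous_on {0..L} w"
    and cg: "continuous_on {0..L} g2"
    and da: "\<And>x. x \<in> {0<..<L} \<Longrightarrow> (a has_real_derivative b x) (at x)"
    and dJ: "\<And>x. x \<in> {0<..<L} \<Longrightarrow>
       ((\<lambda>y. a y * (\<eta> * b y / a y + g2 y * b y + w y)) has_real_derivative c x) (at x)"
    and J0: "a 0 * (\<eta> * b 0 / a 0 + g2 0 * b 0 + w 0) = 0"
    and JL: "a L * (\<eta> * b L / a L + g2 L * b L + w L) = 0"
  shows "integral {0..L} (\<lambda>x. a x powr (p - 1) * c x) =
     - (p - 1) * integral {0..L} (\<lambda>x. a x powr (p - 2) * b x * ((\<eta> + a x * g2 x) * b x + a x * w x))"
proof -
  define J where "J = (\<lambda>y. a y * (\<eta> * b y / a y + g2 y * b y + w y))"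
  define J' where "J' = (\<lambda>y. (\<eta> + a y * g2 y) * b y + a y * w y)"
  have JJ: "J x = J' x" if "x \<in> {0..L}" for x
    using pos[OF that] unfolding J_def J'_def by (simp add: field_simps)
  have anz: "\<And>x. x \<in> {0..L} \<Longrightarrow> a x \<noteq> 0" using pos by (metis less_irrefl)
  have cJ: "continuous_on {0..L} J"
    unfolding J_def using anz by (intro continuous_intros ca cb cw cg) auto
  have cJ': "continuous_on {0..L} J'"
    unfolding J'_def by (intro continuous_intros ca cb cw cg)
  define h where "h = (\<lambda>x. a x powr (p - 1) * J x)"
  define h' where "h' = (\<lambda>x. (p - 1) * a x powr (p - 2) * b x * J x + a x powr (p - 1) * c x)"
  have "(h' has_integral (h L - h 0)) {0..L}"
  proof (rule fundamental_theorem_of_calculus_interior)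
    show "0 \<le> L" using L by simp
    show "continuous_on {0..L} h"
      unfolding h_def using pos anz by (intro continuous_intros ca cJ) auto
    fix x assume x: "x \<in> {0<..<L}"
    have ax: "0 < a x" using pos x by auto
    have "(h has_real_derivative h' x) (at x)"
    proof -
      have d1: "((\<lambda>y. a y powr (p - 1)) has_real_derivative (p - 1) * a x powr (p - 1 - 1) * b x) (at x)"
        using ax by (auto intro!: derivative_eq_intros da[OF x])
      have "(h has_real_derivative (p - 1) * a x powr (p - 1 - 1) * b x * J x + c x * a x powr (p - 1)) (at x)"
        unfolding h_def by (rule DERIV_mult[OF d1 dJ[OF x, folded J_def]])
      then show ?thesis unfolding h'_def by (simp add: algebra_simps)
    qed
    then show "(h has_vector_derivative h' x) (at x)"
      by (simp add: has_real_derivative_iff_has_vector_derivative)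
  qed
  moreover have "h L - h 0 = 0" unfolding h_def J_def J0 JL by simp
  ultimately have "(h' has_integral 0) {0..L}" by simp
  then have z: "integral {0..L} h' = 0" by (rule integral_unique)
  have i1: "(\<lambda>x. (p - 1) * a x powr (p - 2) * b x * J x) integrable_on {0..L}"
    using anz by (intro integrable_continuous_real continuous_intros ca cb cJ) auto
  have i2: "(\<lambda>x. a x powr (p - 1) * c x) integrable_on {0..L}"
    using anz by (intro integrable_continuous_real continuous_intros ca cc) auto
  have "integral {0..L} h' = integral {0..L} (\<lambda>x. (p - 1) * a x powr (p - 2) * b x * J x)
       + integral {0..L} (\<lambda>x. a x powr (p - 1) * c x)"
    unfolding h'_def by (rule integral_add[OF i1 i2])
  moreover have "integral {0..L} (\<lambda>x. (p - 1) * a x powr (p - 2) * b x * J x)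
      = (p - 1) * integral {0..L} (\<lambda>x. a x powr (p - 2) * b x * J' x)"
  proof -
    have "integral {0..L} (\<lambda>x. (p - 1) * a x powr (p - 2) * b x * J x)
        = integral {0..L} (\<lambda>x. (p - 1) * (a x powr (p - 2) * b x * J' x))"
      by (rule integral_cong) (simp add: JJ)
    also have "\<dots> = (p - 1) * integral {0..L} (\<lambda>x. a x powr (p - 2) * b x * J' x)"
      by simp
    finally show ?thesis .
  qed
  ultimately show ?thesis using z unfolding J'_def by linarith
qed



lemma pw1:
  fixes a b w g2 P \<eta> k1 S :: real
  assumes a: "0 < a" and eta: "0 < \<eta>" and w: "\<bar>w\<bar> \<le> S" and k: "S\<^sup>2 / 2 \<le> k1" and P: "0 \<le> P"
  shows "- (P * b * ((\<eta> + a * g2) * b + a * w)) + 1/2 * ((\<eta> + 2 * a * g2) * P * b\<^sup>2) \<le> k1 / \<eta> * (P * a\<^sup>2)"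
proof -
  have lhs: "- (P * b * ((\<eta> + a * g2) * b + a * w)) + 1/2 * ((\<eta> + 2 * a * g2) * P * b\<^sup>2)
      = P * (- (\<eta> / 2) * b\<^sup>2 - a * b * w)"
    by (simp add: algebra_simps power2_eq_square)
  have sq: "0 \<le> (\<eta> * b + a * w)\<^sup>2" by simp
  have "2 * \<eta> * (- (\<eta> / 2) * b\<^sup>2 - a * b * w) \<le> a\<^sup>2 * w\<^sup>2"
    using sq by (simp add: algebra_simps power2_eq_square)
  then have e1: "- (\<eta> / 2) * b\<^sup>2 - a * b * w \<le> a\<^sup>2 * w\<^sup>2 / (2 * \<eta>)"
    using eta by (simp add: field_simps)
  have "w\<^sup>2 \<le> S\<^sup>2" using w by (metis abs_ge_zero abs_le_square_iff abs_of_nonneg order_trans power2_abs)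
  then have "w\<^sup>2 \<le> 2 * k1" using k by simp
  then have "a\<^sup>2 * w\<^sup>2 \<le> a\<^sup>2 * (2 * k1)" by (simp add: mult_left_mono)
  then have e2: "a\<^sup>2 * w\<^sup>2 / (2 * \<eta>) \<le> k1 / \<eta> * a\<^sup>2"
    using eta by (simp add: field_simps)
  have "P * (- (\<eta> / 2) * b\<^sup>2 - a * b * w) \<le> P * (k1 / \<eta> * a\<^sup>2)"
    using e1 e2 P by (intro mult_left_mono) auto
  then show ?thesis unfolding lhs by (simp add: algebra_simps)
qed

lemma ineq1:
  fixes a b w g2 :: "real \<Rightarrow> real"
  assumes L: "0 < L" and eta: "0 < \<eta>"
    and pos: "\<And>x. x \<in> {0..L} \<Longrightarrow> 0 < a x"
    and ca: "continuous_on {0..L} a" and cb: "continuous_on {0..L} b"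
    and cw: "continuous_on {0..L} w" and cg: "continuous_on {0..L} g2"
    and wS: "\<And>x. x \<in> {0..L} \<Longrightarrow> \<bar>w x\<bar> \<le> S" and k: "S\<^sup>2 / 2 \<le> k1"
  shows "- integral {0..L} (\<lambda>x. a x powr (p - 2) * b x * ((\<eta> + a x * g2 x) * b x + a x * w x))
     + 1/2 * integral {0..L} (\<lambda>x. (\<eta> + 2 * a x * g2 x) * a x powr (p - 2) * (b x)\<^sup>2)
     \<le> k1 / \<eta> * integral {0..L} (\<lambda>x. a x powr p)"
proof -
  have anz: "\<And>x. x \<in> {0..L} \<Longrightarrow> a x \<noteq> 0" using pos by (metis less_irrefl)
  define F1 where "F1 = (\<lambda>x. a x powr (p - 2) * b x * ((\<eta> + a x * g2 x) * b x + a x * w x))"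
  define F2 where "F2 = (\<lambda>x. (\<eta> + 2 * a x * g2 x) * a x powr (p - 2) * (b x)\<^sup>2)"
  define F3 where "F3 = (\<lambda>x. a x powr p)"
  have i1: "F1 integrable_on {0..L}" unfolding F1_def
    using anz by (intro integrable_continuous_real continuous_intros ca cb cw cg) auto
  have i2: "F2 integrable_on {0..L}" unfolding F2_def
    using anz by (intro integrable_continuous_real continuous_intros ca cb cw cg) auto
  have i3: "F3 integrable_on {0..L}" unfolding F3_def
    using anz by (intro integrable_continuous_real continuous_intros ca cb cw cg) auto
  have h1: "((\<lambda>x. - F1 x + 1/2 * F2 x) has_integral (- integral {0..L} F1 + 1/2 * integral {0..L} F2)) {0..L}"
    by (intro has_integral_add has_integral_neg has_integral_mult_right integrable_integral i1 i2)
  have h3: "((\<lambda>x. k1 / \<eta> * F3 x) has_integral (k1 / \<eta> * integral {0..L} F3)) {0..L}"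
    by (intro has_integral_mult_right integrable_integral i3)
  have "- integral {0..L} F1 + 1/2 * integral {0..L} F2 \<le> k1 / \<eta> * integral {0..L} F3"
  proof (rule has_integral_le[OF h1 h3])
    fix x assume x: "x \<in> {0..L}"
    have ax: "0 < a x" using pos[OF x] .
    have "a x powr p = a x powr (p - 2) * (a x)\<^sup>2"
      using ax by (simp add: powr_diff power2_eq_square field_simps)
    then show "- F1 x + 1/2 * F2 x \<le> k1 / \<eta> * F3 x"
      unfolding F1_def F2_def F3_def
      using pw1[OF ax eta wS[OF x] k, of "a x powr (p - 2)" "b x" "g2 x"] by simp
  qed
  then show ?thesis unfolding F1_def F2_def F3_def .
qed

lemma amgm_abs:
  fixes z \<delta> :: real
  assumes "0 < \<delta>"
  shows "\<bar>z\<bar> \<le> \<delta> / 2 * z\<^sup>2 + 1 / (2 * \<delta>)"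
proof -
  have "0 \<le> (\<delta> * \<bar>z\<bar> - 1)\<^sup>2" by simp
  then have "2 * \<delta> * \<bar>z\<bar> \<le> \<delta>\<^sup>2 * z\<^sup>2 + 1"
    by (simp add: power2_eq_square algebra_simps)
  then show ?thesis using assms by (simp add: field_simps power2_eq_square)
qed

lemma nashp:
  fixes a b :: "real \<Rightarrow> real"
  assumes L: "0 < L"
    and pos: "\<And>x. x \<in> {0..L} \<Longrightarrow> 0 < a x"
    and ca: "continuous_on {0..L} a" and cb: "continuous_on {0..L} b"
    and da: "\<And>x. x \<in> {0..L} \<Longrightarrow> (a has_real_derivative b x) (at x within {0..L})"
    and dl: "0 < \<delta>"
  shows "L * integral {0..L} (\<lambda>x. a x powr p) \<le> (integral {0..L} (\<lambda>x. a x powr (p/2)))\<^sup>2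
     + L * integral {0..L} (\<lambda>x. a x powr (p/2))
         * (\<delta> / 2 * (p\<^sup>2 / 4) * integral {0..L} (\<lambda>x. a x powr (p - 2) * (b x)\<^sup>2) + L / (2 * \<delta>))"
proof -
  have anz: "\<And>x. x \<in> {0..L} \<Longrightarrow> a x \<noteq> 0" using pos by (metis less_irrefl)
  define w where "w = (\<lambda>x. a x powr (p/2))"
  define wx where "wx = (\<lambda>x. p/2 * a x powr (p/2 - 1) * b x)"
  have cw: "continuous_on {0..L} w" unfolding w_def
    using anz by (intro continuous_intros ca) auto
  have cwx: "continuous_on {0..L} wx" unfolding wx_def
    using anz by (intro continuous_intros ca cb) auto
  have dw: "(w has_real_derivative wx x) (at x within {0..L})" if x: "x \<in> {0..L}" for x
    unfolding w_def wx_def using pos[OF x]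
    by (auto intro!: derivative_eq_intros da[OF x] simp: algebra_simps)
  have wpos: "\<And>x. x \<in> {0..L} \<Longrightarrow> 0 \<le> w x" unfolding w_def by simp
  have N: "L * integral {0..L} (\<lambda>x. (w x)\<^sup>2) \<le> (integral {0..L} w)\<^sup>2
           + L * integral {0..L} w * integral {0..L} (\<lambda>x. \<bar>wx x\<bar>)"
    by (rule nash0[OF L dw cw cwx wpos])
  have e1: "integral {0..L} (\<lambda>x. (w x)\<^sup>2) = integral {0..L} (\<lambda>x. a x powr p)"
  proof (rule integral_cong)
    fix x assume x: "x \<in> {0..L}"
    show "(w x)\<^sup>2 = a x powr p" unfolding w_def using pos[OF x]
      by (simp add: power2_eq_square powr_add[symmetric])
  qed
  define Q where "Q = integral {0..L} (\<lambda>x. a x powr (p - 2) * (b x)\<^sup>2)"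
  have iQ: "(\<lambda>x. a x powr (p - 2) * (b x)\<^sup>2) integrable_on {0..L}"
    using anz by (intro integrable_continuous_real continuous_intros ca cb) auto
  have iA: "(\<lambda>x. \<bar>wx x\<bar>) integrable_on {0..L}"
    by (intro integrable_continuous_real continuous_intros cwx)
  have hr: "((\<lambda>x. \<delta> / 2 * (p\<^sup>2 / 4) * (a x powr (p - 2) * (b x)\<^sup>2) + 1 / (2 * \<delta>)) has_integral
      (\<delta> / 2 * (p\<^sup>2 / 4) * Q + L / (2 * \<delta>))) {0..L}"
  proof -
    have "((\<lambda>x. \<delta> / 2 * (p\<^sup>2 / 4) * (a x powr (p - 2) * (b x)\<^sup>2) + 1 / (2 * \<delta>)) has_integral
      (\<delta> / 2 * (p\<^sup>2 / 4) * Q + Henstock_Kurzweil_Integration.content {0..L} *\<^sub>R (1 / (2 * \<delta>)))) {0..L}"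
      unfolding Q_def
      by (intro has_integral_add has_integral_mult_right integrable_integral iQ has_integral_const_real)
    then show ?thesis using L by simp
  qed
  have A: "integral {0..L} (\<lambda>x. \<bar>wx x\<bar>) \<le> \<delta> / 2 * (p\<^sup>2 / 4) * Q + L / (2 * \<delta>)"
  proof (rule has_integral_le[OF integrable_integral[OF iA] hr])
    fix x assume x: "x \<in> {0..L}"
    have "(wx x)\<^sup>2 = p\<^sup>2 / 4 * (a x powr (p - 2) * (b x)\<^sup>2)"
    proof -
      have "(a x powr (p/2 - 1))\<^sup>2 = a x powr (p - 2)"
        using pos[OF x] by (simp add: power2_eq_square powr_add[symmetric])
      then show ?thesis unfolding wx_def by (simp add: power_mult_distrib power_divide)
    qed
    then show "\<bar>wx x\<bar> \<le> \<delta> / 2 * (p\<^sup>2 / 4) * (a x powr (p - 2) * (b x)\<^sup>2) + 1 / (2 * \<delta>)"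
      using amgm_abs[OF dl, of "wx x"] by (simp only: mult.assoc[symmetric])
  qed
  have M0: "0 \<le> integral {0..L} w"
    using wpos by (intro integral_nonneg integrable_continuous_real cw) auto
  have AA: "L * integral {0..L} w * integral {0..L} (\<lambda>x. \<bar>wx x\<bar>)
      \<le> L * integral {0..L} w * (\<delta> / 2 * (p\<^sup>2 / 4) * Q + L / (2 * \<delta>))"
    using A M0 L by (intro mult_left_mono) auto
  have "L * integral {0..L} (\<lambda>x. a x powr p) = L * integral {0..L} (\<lambda>x. (w x)\<^sup>2)"
    using e1 by simp
  also have "\<dots> \<le> (integral {0..L} w)\<^sup>2 + L * integral {0..L} w * integral {0..L} (\<lambda>x. \<bar>wx x\<bar>)"
    by (rule N)
  also have "\<dots> \<le> (integral {0..L} w)\<^sup>2 + L * integral {0..L} w * (\<delta> / 2 * (p\<^sup>2 / 4) * Q + L / (2 * \<delta>))"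
    using AA by (rule add_left_mono)
  finally show ?thesis unfolding Q_def w_def .
qed



lemma alg2:
  fixes p \<eta> L k1 X P Q M :: real
  assumes L: "0 < L" and eta: "0 < \<eta>" and k: "0 \<le> k1" and p: "2 < \<bar>p\<bar>"
    and hX: "- X + \<eta> / 2 * Q \<le> k1 / \<eta> * P"
    and hN: "\<And>\<delta>. 0 < \<delta> \<Longrightarrow> L * P \<le> M\<^sup>2 + L * M * (\<delta> / 2 * (p\<^sup>2 / 4) * Q + L / (2 * \<delta>))"
    and Q: "0 \<le> Q" and P: "0 \<le> P" and M: "0 \<le> M"
  shows "- (p * (p - 1)) * X + 1 * P
     \<le> ((2 * k1 / \<eta> + 1) / L + (2 * k1 / \<eta> + 1)\<^sup>2 * L / (4 * \<eta>) + 1) * \<bar>p\<bar> powr 4 * M\<^sup>2"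
proof -
  define E where "E = p * (p - 1)"
  define C where "C = 2 * k1 / \<eta> + 1"
  define B where "B = E * k1 / \<eta> + 1"
  have p2: "4 \<le> p\<^sup>2" using p by (metis abs_le_square_iff abs_numeral less_imp_le power2_eq_square numeral_times_numeral semiring_norm(12) num_double)
  have E0: "0 < E" unfolding E_def using p by (cases "p \<ge> 0") (auto intro: mult_pos_pos mult_neg_neg)
  have E1: "p\<^sup>2 / 2 \<le> E"
  proof -
    have "0 \<le> p * (p - 2)" using p by (cases "p \<ge> 0") (auto intro: mult_nonneg_nonneg mult_nonpos_nonpos)
    then show ?thesis unfolding E_def by (simp add: algebra_simps power2_eq_square)
  qed
  have E2: "E \<le> 2 * p\<^sup>2"
  proof -
    have "- p \<le> p\<^sup>2"
    proof (cases "p \<ge> 0")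
      case False
      then have "(-p) * 1 \<le> (-p) * (-p)" using p by (intro mult_left_mono) auto
      then show ?thesis by (simp add: power2_eq_square)
    qed (use p2 in auto)
    then show ?thesis unfolding E_def by (simp add: algebra_simps power2_eq_square)
  qed
  have s1: "- E * X \<le> E * (k1 / \<eta> * P) - E * (\<eta> / 2 * Q)"
  proof -
    have "E * (- X + \<eta> / 2 * Q) \<le> E * (k1 / \<eta> * P)" using hX E0 by (intro mult_left_mono) auto
    then show ?thesis by (simp add: algebra_simps)
  qed
  have s2: "\<eta> * p\<^sup>2 / 4 * Q \<le> E * (\<eta> / 2 * Q)"
  proof -
    have "(p\<^sup>2 / 2) * (\<eta> / 2 * Q) \<le> E * (\<eta> / 2 * Q)" using E1 eta Q by (intro mult_right_mono) auto
    then show ?thesis by (simp add: field_simps)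
  qed
  have LHS: "- (p * (p - 1)) * X + 1 * P \<le> B * P - \<eta> * p\<^sup>2 / 4 * Q"
  proof -
    have "B * P = E * (k1 / \<eta> * P) + P" by (simp add: B_def algebra_simps)
    moreover have "- (p * (p - 1)) * X = - E * X" by (simp add: E_def)
    ultimately show ?thesis using s1 s2 by linarith
  qed
  have B1: "1 \<le> B" unfolding B_def using E0 k eta by simp
  have BC: "B \<le> p\<^sup>2 * C"
  proof -
    have "E * k1 / \<eta> \<le> 2 * p\<^sup>2 * k1 / \<eta>" using E2 k eta by (intro divide_right_mono mult_right_mono) auto
    then show ?thesis unfolding B_def C_def using p2 by (simp add: algebra_simps)
  qed
  have pw: "\<bar>p\<bar> powr 4 = p\<^sup>2 * p\<^sup>2"
  proof -
    have "\<bar>p\<bar> powr 4 = \<bar>p\<bar> ^ 4" using p by (subst powr_numeral) auto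
    then show ?thesis by (simp add: power2_eq_square power4_eq_xxxx)
  qed
  have C0: "0 \<le> C" unfolding C_def using k eta by simp
  have Kpos: "0 \<le> (C / L + C\<^sup>2 * L / (4 * \<eta>) + 1) * \<bar>p\<bar> powr 4 * M\<^sup>2"
    using C0 L eta by simp
  show ?thesis
  proof (cases "M = 0")
    case True
    have "L * P \<le> 0" using hN[of 1] True by simp
    then have "P \<le> 0" using L by (simp add: mult_le_0_iff)
    then have "B * P - \<eta> * p\<^sup>2 / 4 * Q \<le> 0" using B1 Q eta P by simp
    then show ?thesis using LHS Kpos unfolding C_def by linarith
  next
    case False
    then have M0: "0 < M" using M by simp
    define \<delta> where "\<delta> = 2 * \<eta> / (B * M)"
    have d0: "0 < \<delta>" unfolding \<delta>_def using eta B1 M0 by simp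
    have N: "L * P \<le> M\<^sup>2 + L * M * (\<delta> / 2 * (p\<^sup>2 / 4) * Q + L / (2 * \<delta>))" by (rule hN[OF d0])
    have e1: "B * M * \<delta> = 2 * \<eta>" unfolding \<delta>_def using B1 M0 by simp
    have "B * (L * P) \<le> B * (M\<^sup>2 + L * M * (\<delta> / 2 * (p\<^sup>2 / 4) * Q + L / (2 * \<delta>)))"
      using N B1 by (intro mult_left_mono) auto
    also have "\<dots> = B * M\<^sup>2 + L * (\<eta> * p\<^sup>2 / 4 * Q) + L * (B\<^sup>2 * M\<^sup>2 * L / (4 * \<eta>))"
    proof -
      have a1: "B * (L * M * (\<delta> / 2 * (p\<^sup>2 / 4) * Q)) = L * (\<eta> * p\<^sup>2 / 4 * Q)"
      proof -
        have "B * (L * M * (\<delta> / 2 * (p\<^sup>2 / 4) * Q)) = (B * M * \<delta>) * (L * p\<^sup>2 * Q / 8)" by (simp add: algebra_simps)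
        then show ?thesis using e1 by (simp add: algebra_simps)
      qed
      have a2: "B * (L * M * (L / (2 * \<delta>))) = L * (B\<^sup>2 * M\<^sup>2 * L / (4 * \<eta>))"
        unfolding \<delta>_def using B1 M0 eta by (simp add: field_simps power2_eq_square)
      show ?thesis using a1 a2 by (simp add: algebra_simps)
    qed
    finally have "L * (B * P) \<le> L * (B * M\<^sup>2 / L + \<eta> * p\<^sup>2 / 4 * Q + B\<^sup>2 * M\<^sup>2 * L / (4 * \<eta>))"
      using L by (simp add: algebra_simps)
    then have BP: "B * P \<le> B * M\<^sup>2 / L + \<eta> * p\<^sup>2 / 4 * Q + B\<^sup>2 * M\<^sup>2 * L / (4 * \<eta>)"
      using L by simp
    have f1: "B / L \<le> p\<^sup>2 * p\<^sup>2 * (C / L)"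
    proof -
      have "B \<le> p\<^sup>2 * C" by (rule BC)
      also have "\<dots> \<le> p\<^sup>2 * p\<^sup>2 * C"
      proof -
        have "p\<^sup>2 * 1 \<le> p\<^sup>2 * p\<^sup>2" using p2 by (intro mult_left_mono) auto
        then show ?thesis using C0 by (intro mult_right_mono) auto
      qed
      finally show ?thesis using L by (simp add: divide_right_mono)
    qed
    have f2: "B\<^sup>2 \<le> p\<^sup>2 * p\<^sup>2 * C\<^sup>2"
    proof -
      have "B\<^sup>2 \<le> (p\<^sup>2 * C)\<^sup>2" using BC B1 by (intro power_mono) auto
      then show ?thesis by (simp add: power_mult_distrib)
    qed
    have "B * M\<^sup>2 / L + B\<^sup>2 * M\<^sup>2 * L / (4 * \<eta>) = M\<^sup>2 * (B / L + B\<^sup>2 * (L / (4 * \<eta>)))"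
      by (simp add: algebra_simps)
    also have "\<dots> \<le> M\<^sup>2 * (p\<^sup>2 * p\<^sup>2 * (C / L) + p\<^sup>2 * p\<^sup>2 * C\<^sup>2 * (L / (4 * \<eta>)))"
      using f1 f2 L eta by (intro mult_left_mono add_mono mult_right_mono) auto
    also have "\<dots> \<le> (C / L + C\<^sup>2 * L / (4 * \<eta>) + 1) * \<bar>p\<bar> powr 4 * M\<^sup>2"
      unfolding pw by (simp add: algebra_simps)
    finally show ?thesis using LHS BP unfolding C_def by linarith
  qed
qed



lemma at_t:
  fixes u ux ut v :: "real \<Rightarrow> real \<Rightarrow> real" and f2 :: "real \<Rightarrow> real"
  assumes L: "0 < L" and eta: "0 < \<eta>" and t: "t \<in> {0<..<T}"
    and pos: "\<And>s x. s \<in> {0..<T} \<Longrightarrow> x \<in> {0..L} \<Longrightarrow> 0 < u s x"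
    and dx: "\<And>s x. s \<in> {0..<T} \<Longrightarrow> x \<in> {0..L} \<Longrightarrow> ((\<lambda>y. u s y) has_real_derivative ux s x) (at x within {0..L})"
    and dt: "\<And>s x. s \<in> {0..<T} \<Longrightarrow> x \<in> {0..L} \<Longrightarrow> ((\<lambda>s. u s x) has_real_derivative ut s x) (at s within {0..<T})"
    and cu: "continuous_on ({0..<T} \<times> {0..L}) (\<lambda>(s,x). u s x)"
    and cux: "continuous_on ({0..<T} \<times> {0..L}) (\<lambda>(s,x). ux s x)"
    and cut: "continuous_on ({0..<T} \<times> {0..L}) (\<lambda>(s,x). ut s x)"
    and cv: "continuous_on ({0..<T} \<times> {0..L}) (\<lambda>(s,x). v s x)"
    and cf2: "continuous_on {0<..} f2" and f2nn: "\<And>s. 0 < s \<Longrightarrow> 0 \<le> f2 s"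
    and vS: "\<And>x. x \<in> {0<..<L} \<Longrightarrow> \<bar>v t x\<bar> \<le> S"
    and dJ: "\<And>x. x \<in> {0<..<L} \<Longrightarrow>
       ((\<lambda>y. u t y * (\<eta> * ux t y / u t y + f2 (u t y) * ux t y + v t y)) has_real_derivative ut t x) (at x)"
    and J0: "u t 0 * (\<eta> * ux t 0 / u t 0 + f2 (u t 0) * ux t 0 + v t 0) = 0"
    and JL: "u t L * (\<eta> * ux t L / u t L + f2 (u t L) * ux t L + v t L) = 0"
    and k: "S\<^sup>2 / 2 \<le> k1" "0 \<le> k1"
  shows "(p \<noteq> 0 \<and> p \<noteq> 1 \<longrightarrow>
            (\<lambda>s. integral {0..L} (\<lambda>x. u s x powr p)) differentiable (at t)
          \<and> 1 / (p * (p - 1)) * deriv (\<lambda>s. integral {0..L} (\<lambda>x. u s x powr p)) t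
            + 1/2 * integral {0..L} (\<lambda>x. (\<eta> + 2 * u t x * f2 (u t x))
                          * u t x powr (p - 2) * (deriv (u t) x)\<^sup>2)
            \<le> k1 / \<eta> * integral {0..L} (\<lambda>x. u t x powr p))
       \<and> (2 < \<bar>p\<bar> \<longrightarrow>
            (\<lambda>s. integral {0..L} (\<lambda>x. u s x powr p)) differentiable (at t)
          \<and> deriv (\<lambda>s. integral {0..L} (\<lambda>x. u s x powr p)) t + 1 * integral {0..L} (\<lambda>x. u t x powr p)
            \<le> ((2 * k1 / \<eta> + 1) / L + (2 * k1 / \<eta> + 1)\<^sup>2 * L / (4 * \<eta>) + 1) * \<bar>p\<bar> powr 4
               * (integral {0..L} (\<lambda>x. u t x powr (p / 2)))\<^sup>2)"
proof -
  have t0: "t \<in> {0..<T}" using t by auto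
  define a where "a = u t"
  define b where "b = ux t"
  define c where "c = ut t"
  define w where "w = v t"
  define g2 where "g2 = (\<lambda>x. f2 (u t x))"
  have apos: "\<And>x. x \<in> {0..L} \<Longrightarrow> 0 < a x" unfolding a_def using pos t0 by auto
  have anz: "\<And>x. x \<in> {0..L} \<Longrightarrow> a x \<noteq> 0" using apos by (metis less_irrefl)
  have ca: "continuous_on {0..L} a" unfolding a_def by (rule slice_cont[OF cu t0])
  have cb: "continuous_on {0..L} b" unfolding b_def by (rule slice_cont[OF cux t0])
  have cc: "continuous_on {0..L} c" unfolding c_def by (rule slice_cont[OF cut t0])
  have cw: "continuous_on {0..L} w" unfolding w_def by (rule slice_cont[OF cv t0])
  have cg: "continuous_on {0..L} g2" unfolding g2_def
    using continuous_on_compose2[OF cf2 ca[unfolded a_def]] apos[unfolded a_def] by force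
  have daw: "\<And>x. x \<in> {0..L} \<Longrightarrow> (a has_real_derivative b x) (at x within {0..L})"
    unfolding a_def b_def using dx[OF t0] by simp
  have dai: "(a has_real_derivative b x) (at x)" if x: "x \<in> {0<..<L}" for x
  proof -
    have "at x within {0..L} = at x"
      using x by (intro at_within_interior) auto
    then show ?thesis using daw[of x] x by auto
  qed
  have wS: "\<bar>w x\<bar> \<le> S" if x: "x \<in> {0..L}" for x
  proof -
    have cl: "closure {0<..<L} = {0..L}" using L by simp
    show ?thesis
      apply (rule continuous_le_on_closure[of "{0<..<L}" "\<lambda>x. \<bar>w x\<bar>"])
      using cw x vS cl unfolding w_def by (auto intro!: continuous_intros)
  qed
  define X where "X p = integral {0..L} (\<lambda>x. a x powr (p - 2) * b x * ((\<eta> + a x * g2 x) * b x + a x * w x))" for p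
  have HD: "((\<lambda>s. integral {0..L} (\<lambda>x. u s x powr p)) has_real_derivative (- (p * (p - 1)) * X p)) (at t)" for p
  proof -
    have d: "((\<lambda>s. integral {0..L} (\<lambda>x. u s x powr p)) has_real_derivative
           integral {0..L} (\<lambda>x. p * u t x powr (p - 1) * ut t x)) (at t)"
      by (rule tder[OF t pos dt cu cut])
    have "integral {0..L} (\<lambda>x. p * u t x powr (p - 1) * ut t x) = p * integral {0..L} (\<lambda>x. a x powr (p - 1) * c x)"
      unfolding a_def c_def by (simp add: mult.assoc)
    also have "\<dots> = p * (- (p - 1) * X p)"
      unfolding X_def
      by (subst ibp[OF L apos ca cb cc cw cg dai]) (use dJ J0 JL in \<open>auto simp: a_def b_def c_def w_def g2_def\<close>)
    also have "\<dots> = - (p * (p - 1)) * X p" by (simp add: algebra_simps)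
    finally show ?thesis using d by simp
  qed
  have diff: "(\<lambda>s. integral {0..L} (\<lambda>x. u s x powr p)) differentiable (at t)" for p
    using HD[of p] real_differentiable_def by blast
  have der: "deriv (\<lambda>s. integral {0..L} (\<lambda>x. u s x powr p)) t = - (p * (p - 1)) * X p" for p
    using HD[of p] by (rule DERIV_imp_deriv)
  have I1: "- X p + 1/2 * integral {0..L} (\<lambda>x. (\<eta> + 2 * a x * g2 x) * a x powr (p - 2) * (b x)\<^sup>2)
     \<le> k1 / \<eta> * integral {0..L} (\<lambda>x. a x powr p)" for p
    unfolding X_def by (rule ineq1[OF L eta apos ca cb cw cg wS k(1)])
  have dd: "integral {0..L} (\<lambda>x. (\<eta> + 2 * u t x * f2 (u t x)) * u t x powr (p - 2) * (deriv (u t) x)\<^sup>2)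
      = integral {0..L} (\<lambda>x. (\<eta> + 2 * a x * g2 x) * a x powr (p - 2) * (b x)\<^sup>2)" for p
  proof -
    have "integral {0<..<L} (\<lambda>x. (\<eta> + 2 * u t x * f2 (u t x)) * u t x powr (p - 2) * (deriv (u t) x)\<^sup>2)
      = integral {0<..<L} (\<lambda>x. (\<eta> + 2 * a x * g2 x) * a x powr (p - 2) * (b x)\<^sup>2)"
    proof (rule integral_cong)
      fix x assume x: "x \<in> {0<..<L}"
      have "deriv (u t) x = b x" using dai[OF x] unfolding a_def by (rule DERIV_imp_deriv)
      then show "(\<eta> + 2 * u t x * f2 (u t x)) * u t x powr (p - 2) * (deriv (u t) x)\<^sup>2
          = (\<eta> + 2 * a x * g2 x) * a x powr (p - 2) * (b x)\<^sup>2" by (simp add: a_def g2_def)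
    qed
    then show ?thesis by (simp add: integral_open_interval_real)
  qed
  have part1: "p \<noteq> 0 \<and> p \<noteq> 1 \<longrightarrow>
            (\<lambda>s. integral {0..L} (\<lambda>x. u s x powr p)) differentiable (at t)
          \<and> 1 / (p * (p - 1)) * deriv (\<lambda>s. integral {0..L} (\<lambda>x. u s x powr p)) t
            + 1/2 * integral {0..L} (\<lambda>x. (\<eta> + 2 * u t x * f2 (u t x))
                          * u t x powr (p - 2) * (deriv (u t) x)\<^sup>2)
            \<le> k1 / \<eta> * integral {0..L} (\<lambda>x. u t x powr p)"
  proof
    assume p: "p \<noteq> 0 \<and> p \<noteq> 1"
    then have "p * (p - 1) \<noteq> 0" by simp
    then have "1 / (p * (p - 1)) * deriv (\<lambda>s. integral {0..L} (\<lambda>x. u s x powr p)) t = - X p"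
      unfolding der by simp
    then show "(\<lambda>s. integral {0..L} (\<lambda>x. u s x powr p)) differentiable (at t)
          \<and> 1 / (p * (p - 1)) * deriv (\<lambda>s. integral {0..L} (\<lambda>x. u s x powr p)) t
            + 1/2 * integral {0..L} (\<lambda>x. (\<eta> + 2 * u t x * f2 (u t x))
                          * u t x powr (p - 2) * (deriv (u t) x)\<^sup>2)
            \<le> k1 / \<eta> * integral {0..L} (\<lambda>x. u t x powr p)"
      using diff[of p] I1[of p] dd[of p] by (simp add: a_def)
  qed
  have part2: "2 < \<bar>p\<bar> \<longrightarrow>
            (\<lambda>s. integral {0..L} (\<lambda>x. u s x powr p)) differentiable (at t)
          \<and> deriv (\<lambda>s. integral {0..L} (\<lambda>x. u s x powr p)) t + 1 * integral {0..L} (\<lambda>x. u t x powr p)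
            \<le> ((2 * k1 / \<eta> + 1) / L + (2 * k1 / \<eta> + 1)\<^sup>2 * L / (4 * \<eta>) + 1) * \<bar>p\<bar> powr 4
               * (integral {0..L} (\<lambda>x. u t x powr (p / 2)))\<^sup>2"
  proof
    assume p: "2 < \<bar>p\<bar>"
    define Q where "Q = integral {0..L} (\<lambda>x. a x powr (p - 2) * (b x)\<^sup>2)"
    define P where "P = integral {0..L} (\<lambda>x. a x powr p)"
    define M where "M = integral {0..L} (\<lambda>x. a x powr (p / 2))"
    have Q0: "0 \<le> Q" unfolding Q_def
      using anz by (intro integral_nonneg integrable_continuous_real continuous_intros ca cb) auto
    have P0: "0 \<le> P" unfolding P_def
      using anz by (intro integral_nonneg integrable_continuous_real continuous_intros ca cb) auto
    have M0: "0 \<le> M" unfolding M_def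
      using anz by (intro integral_nonneg integrable_continuous_real continuous_intros ca cb) auto
    have F2: "\<eta> * Q \<le> integral {0..L} (\<lambda>x. (\<eta> + 2 * a x * g2 x) * a x powr (p - 2) * (b x)\<^sup>2)"
    proof -
      have "integral {0..L} (\<lambda>x. \<eta> * (a x powr (p - 2) * (b x)\<^sup>2))
          \<le> integral {0..L} (\<lambda>x. (\<eta> + 2 * a x * g2 x) * a x powr (p - 2) * (b x)\<^sup>2)"
      proof (rule integral_le)
        show "(\<lambda>x. \<eta> * (a x powr (p - 2) * (b x)\<^sup>2)) integrable_on {0..L}"
          using anz by (intro integrable_continuous_real continuous_intros ca cb) auto
        show "(\<lambda>x. (\<eta> + 2 * a x * g2 x) * a x powr (p - 2) * (b x)\<^sup>2) integrable_on {0..L}"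
          using anz by (intro integrable_continuous_real continuous_intros ca cb cg) auto
        fix x assume x: "x \<in> {0..L}"
        have "0 \<le> g2 x" unfolding g2_def using f2nn pos[OF t0 x] by simp
        then have "\<eta> \<le> \<eta> + 2 * a x * g2 x" using apos[OF x] by simp
        then show "\<eta> * (a x powr (p - 2) * (b x)\<^sup>2) \<le> (\<eta> + 2 * a x * g2 x) * a x powr (p - 2) * (b x)\<^sup>2"
          by (metis mult.assoc mult_right_mono powr_ge_zero zero_le_power2 zero_le_mult_iff)
      qed
      then show ?thesis unfolding Q_def by simp
    qed
    have hX: "- X p + \<eta> / 2 * Q \<le> k1 / \<eta> * P"
      using I1[of p] F2 unfolding P_def by linarith
    have hN: "L * P \<le> M\<^sup>2 + L * M * (\<delta> / 2 * (p\<^sup>2 / 4) * Q + L / (2 * \<delta>))" if "0 < \<delta>" for \<delta>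
      unfolding P_def M_def Q_def by (rule nashp[OF L apos ca cb daw that])
    have "- (p * (p - 1)) * X p + 1 * P
     \<le> ((2 * k1 / \<eta> + 1) / L + (2 * k1 / \<eta> + 1)\<^sup>2 * L / (4 * \<eta>) + 1) * \<bar>p\<bar> powr 4 * M\<^sup>2"
      by (rule alg2[OF L eta k(2) p hX hN Q0 P0 M0])
    then show "(\<lambda>s. integral {0..L} (\<lambda>x. u s x powr p)) differentiable (at t)
          \<and> deriv (\<lambda>s. integral {0..L} (\<lambda>x. u s x powr p)) t + 1 * integral {0..L} (\<lambda>x. u t x powr p)
            \<le> ((2 * k1 / \<eta> + 1) / L + (2 * k1 / \<eta> + 1)\<^sup>2 * L / (4 * \<eta>) + 1) * \<bar>p\<bar> powr 4
               * (integral {0..L} (\<lambda>x. u t x powr (p / 2)))\<^sup>2"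
      using diff[of p] unfolding der P_def M_def a_def by simp
  qed
  show ?thesis using part1 part2 by blast
qed



definition K3c :: "real \<Rightarrow> real \<Rightarrow> real \<Rightarrow> real" where
  "K3c a b c = (2 * \<bar>a\<bar> / \<bar>c\<bar> + 1) / \<bar>b\<bar> + (2 * \<bar>a\<bar> / \<bar>c\<bar> + 1)\<^sup>2 * \<bar>b\<bar> / (4 * \<bar>c\<bar>) + 1"

lemma K3c_pos: "0 < K3c a b c"
proof -
  have "0 \<le> (2 * \<bar>a\<bar> / \<bar>c\<bar> + 1) / \<bar>b\<bar>" by simp
  moreover have "0 \<le> (2 * \<bar>a\<bar> / \<bar>c\<bar> + 1)\<^sup>2 * \<bar>b\<bar> / (4 * \<bar>c\<bar>)" by simp
  ultimately show ?thesis unfolding K3c_def by linarith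
qed

lemma main_impl:
  fixes L \<beta> T \<eta> :: real and f f1 f2 f3 f4 :: "real \<Rightarrow> real" and v u :: "real \<Rightarrow> real \<Rightarrow> real"
  assumes H: "0 < L \<and> 0 < \<beta> \<and> \<beta> \<le> 1 \<and> 0 < T \<and> 0 < \<eta>
          \<and> C4beta_loc_pos \<beta> f f1 f2 f3 f4 \<and> (\<forall>s>0. f2 s \<ge> 0)
          \<and> C1_strip T L v
          \<and> bdd_above {\<bar>v t x\<bar> | t x. t \<in> {0..<T} \<and> x \<in> {0<..<L}}
          \<and> FP_classical_solution L T \<eta> v f2 u"
  shows "let k1 = (sup_norm_strip T L v)\<^sup>2 / 2 + 1;
               I = (\<lambda>p s. integral {0..L} (\<lambda>x. u s x powr p))
           in
            (\<forall>p. p \<noteq> 0 \<and> p \<noteq> 1 \<longrightarrow> (\<forall>t\<in>{0<..<T}.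
                I p differentiable (at t)
              \<and> 1 / (p * (p - 1)) * deriv (I p) t
                + 1/2 * integral {0..L} (\<lambda>x. (\<eta> + 2 * u t x * f2 (u t x))
                          * u t x powr (p - 2) * (deriv (u t) x)\<^sup>2)
                \<le> k1 / \<eta> * I p t))
          \<and> (\<forall>p. \<bar>p\<bar> > 2 \<longrightarrow> (\<forall>t\<in>{0<..<T}.
                I p differentiable (at t)
              \<and> deriv (I p) t + 1 * I p t
                \<le> K3c k1 L \<eta> * \<bar>p\<bar> powr 4 * (I (p / 2) t)\<^sup>2))"
proof -
  have L: "0 < L" and eta: "0 < \<eta>" using H by auto
  define S where "S = sup_norm_strip T L v"
  define k1 where "k1 = S\<^sup>2 / 2 + 1"
  have k: "S\<^sup>2 / 2 \<le> k1" "0 \<le> k1" "0 < k1" unfolding k1_def by (auto intro: add_nonneg_pos)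
  have K3e: "K3c k1 L \<eta> = (2 * k1 / \<eta> + 1) / L + (2 * k1 / \<eta> + 1)\<^sup>2 * L / (4 * \<eta>) + 1"
    unfolding K3c_def using k L eta by simp
  obtain ux uxx ut where
    F1: "\<forall>t\<in>{0..<T}. \<forall>x\<in>{0..L}. 0 < u t x
          \<and> ((\<lambda>y. u t y) has_real_derivative ux t x) (at x within {0..L})
          \<and> ((\<lambda>y. ux t y) has_real_derivative uxx t x) (at x within {0..L})
          \<and> ((\<lambda>s. u s x) has_real_derivative ut t x) (at t within {0..<T})"
    and cu: "continuous_on ({0..<T} \<times> {0..L}) (\<lambda>(t,x). u t x)"
    and cux: "continuous_on ({0..<T} \<times> {0..L}) (\<lambda>(t,x). ux t x)"
    and cut: "continuous_on ({0..<T} \<times> {0..L}) (\<lambda>(t,x). ut t x)"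
    and FJ: "\<forall>t\<in>{0<..<T}. \<forall>x\<in>{0<..<L}. ((\<lambda>y. u t y * (\<eta> * ux t y / u t y + f2 (u t y) * ux t y + v t y)) has_real_derivative ut t x) (at x)"
    and FB: "\<forall>t\<in>{0<..<T}. u t 0 * (\<eta> * ux t 0 / u t 0 + f2 (u t 0) * ux t 0 + v t 0) = 0
              \<and> u t L * (\<eta> * ux t L / u t L + f2 (u t L) * ux t L + v t L) = 0"
    using H unfolding FP_classical_solution_def Let_def by blast
  obtain vt vx where cv: "continuous_on ({0..<T} \<times> {0..L}) (\<lambda>(t,x). v t x)"
    using H unfolding C1_strip_def by blast
  have cf2: "continuous_on {0<..} f2"
  proof (intro continuous_at_imp_continuous_on ballI)
    fix s :: real assume "s \<in> {0<..}"
    then have "(f2 has_real_derivative f3 s) (at s)" using H unfolding C4beta_loc_pos_def by auto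
    then show "isCont f2 s" by (rule DERIV_isCont)
  qed
  have f2nn: "\<And>s. 0 < s \<Longrightarrow> 0 \<le> f2 s" using H by auto
  have vS: "\<bar>v t x\<bar> \<le> S" if "t \<in> {0..<T}" "x \<in> {0<..<L}" for t x
    unfolding S_def sup_norm_strip_def
    by (rule cSup_upper) (use that H in auto)
  have AT: "(p \<noteq> 0 \<and> p \<noteq> 1 \<longrightarrow>
            (\<lambda>s. integral {0..L} (\<lambda>x. u s x powr p)) differentiable (at t)
          \<and> 1 / (p * (p - 1)) * deriv (\<lambda>s. integral {0..L} (\<lambda>x. u s x powr p)) t
            + 1/2 * integral {0..L} (\<lambda>x. (\<eta> + 2 * u t x * f2 (u t x))
                          * u t x powr (p - 2) * (deriv (u t) x)\<^sup>2)
            \<le> k1 / \<eta> * integral {0..L} (\<lambda>x. u t x powr p))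
       \<and> (2 < \<bar>p\<bar> \<longrightarrow>
            (\<lambda>s. integral {0..L} (\<lambda>x. u s x powr p)) differentiable (at t)
          \<and> deriv (\<lambda>s. integral {0..L} (\<lambda>x. u s x powr p)) t + 1 * integral {0..L} (\<lambda>x. u t x powr p)
            \<le> ((2 * k1 / \<eta> + 1) / L + (2 * k1 / \<eta> + 1)\<^sup>2 * L / (4 * \<eta>) + 1) * \<bar>p\<bar> powr 4
               * (integral {0..L} (\<lambda>x. u t x powr (p / 2)))\<^sup>2)"
    if t: "t \<in> {0<..<T}" for t p
  proof (rule at_t[OF L eta t _ _ _ cu cux cut cv cf2 f2nn _ _ _ _ k(1) k(2)])
    show "\<And>s x. s \<in> {0..<T} \<Longrightarrow> x \<in> {0..L} \<Longrightarrow> 0 < u s x" using F1 by blast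
    show "\<And>s x. s \<in> {0..<T} \<Longrightarrow> x \<in> {0..L} \<Longrightarrow> ((\<lambda>y. u s y) has_real_derivative ux s x) (at x within {0..L})"
      using F1 by blast
    show "\<And>s x. s \<in> {0..<T} \<Longrightarrow> x \<in> {0..L} \<Longrightarrow> ((\<lambda>s. u s x) has_real_derivative ut s x) (at s within {0..<T})"
      using F1 by blast
    show "\<And>x. x \<in> {0<..<L} \<Longrightarrow> \<bar>v t x\<bar> \<le> S" using vS t by auto
    show "\<And>x. x \<in> {0<..<L} \<Longrightarrow>
       ((\<lambda>y. u t y * (\<eta> * ux t y / u t y + f2 (u t y) * ux t y + v t y)) has_real_derivative ut t x) (at x)"
      using FJ t by blast
    show "u t 0 * (\<eta> * ux t 0 / u t 0 + f2 (u t 0) * ux t 0 + v t 0) = 0" using FB t by blast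
    show "u t L * (\<eta> * ux t L / u t L + f2 (u t L) * ux t L + v t L) = 0" using FB t by blast
  qed
  show ?thesis
    unfolding Let_def S_def[symmetric] k1_def[symmetric] K3e
    using AT by blast
qed


theorem propositionA2:
  shows "\<exists>K1 :: real \<Rightarrow> real. (\<forall>s. K1 s > 0) \<and>
    (\<exists>K2 K3 K4 K5 :: real \<Rightarrow> real \<Rightarrow> real \<Rightarrow> real.
       (\<forall>a b c. K2 a b c > 0 \<and> K3 a b c > 0 \<and> K4 a b c > 0 \<and> K5 a b c > 0) \<and>
       (\<forall>(L::real) (\<beta>::real) (T::real) (\<eta>::real)
          (f::real\<Rightarrow>real) f1 f2 f3 f4 (v::real\<Rightarrow>real\<Rightarrow>real) (u::real\<Rightarrow>real\<Rightarrow>real).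
          0 < L \<and> 0 < \<beta> \<and> \<beta> \<le> 1 \<and> 0 < T \<and> 0 < \<eta>
          \<and> C4beta_loc_pos \<beta> f f1 f2 f3 f4 \<and> (\<forall>s>0. f2 s \<ge> 0)
          \<and> C1_strip T L v
          \<and> bdd_above {\<bar>v t x\<bar> | t x. t \<in> {0..<T} \<and> x \<in> {0<..<L}}
          \<and> FP_classical_solution L T \<eta> v f2 u
          \<longrightarrow>
          (let k1 = K1 (sup_norm_strip T L v);
               I = (\<lambda>p s. integral {0..L} (\<lambda>x. u s x powr p))
           in
            (\<forall>p. p \<noteq> 0 \<and> p \<noteq> 1 \<longrightarrow> (\<forall>t\<in>{0<..<T}.
                I p differentiable (at t)
              \<and> 1 / (p * (p - 1)) * deriv (I p) t
                + 1/2 * integral {0..L} (\<lambda>x. (\<eta> + 2 * u t x * f2 (u t x))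
                          * u t x powr (p - 2) * (deriv (u t) x)\<^sup>2)
                \<le> k1 / \<eta> * I p t))
          \<and> (\<forall>p. \<bar>p\<bar> > K5 k1 L \<eta> \<longrightarrow> (\<forall>t\<in>{0<..<T}.
                I p differentiable (at t)
              \<and> deriv (I p) t + K2 k1 L \<eta> * I p t
                \<le> K3 k1 L \<eta> * \<bar>p\<bar> powr (K4 k1 L \<eta>) * (I (p / 2) t)\<^sup>2)))))"
proof -
  have k1pos: "\<forall>s::real. 0 < s\<^sup>2 / 2 + 1"
    by (intro allI add_nonneg_pos) auto
  show ?thesis
    apply (rule exI[where x="\<lambda>s::real. s\<^sup>2 / 2 + 1"])
    apply (rule conjI)
     apply (rule k1pos)
    apply (rule exI[where x="\<lambda>a b c::real. 1::real"])
    apply (rule exI[where x="K3c"])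
    apply (rule exI[where x="\<lambda>a b c::real. 4::real"])
    apply (rule exI[where x="\<lambda>a b c::real. 2::real"])
    apply (rule conjI)
     apply (simp add: K3c_pos)
    apply (intro allI impI)
    apply (rule main_impl)
    apply assumption
    done
qed

end
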